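(* For each $b \geq 0$, define the optimisation objective \[ l_b(\rho) \defeq \frac{\frac{1}{e}(\rho^2 + b\rho + 1)}{\rho\, W_0\!\left(\frac{1}{e}(\rho^2 + b\rho + 1)\right)} \] over $\rho > \sqrt{2}$. The unique minimiser of $l_0$ is \[ \rho_0 \defeq \sqrt{1 + e^{W_0(2/e^2)+2}}. \] More generally, $l_b$ is uniquely minimised by the solution $\rho_b$ of the ordinary differential equation \[ \frac{d}{db}\rho_b = \frac{\rho_b^2}{(\rho_b^2+1)\log(\rho_b^2-1)} = \frac{\rho_b}{2\rho_b+b}\left(1 - \frac{2}{\rho_b^2 + 1}\right) > 0 \] with initial value $\rho_b\big|_{b=0} = \sqrt{1 + e^{W_0(2/e^2)+2}}$. Furthermore, the minimal value of $l_b$ satisfies \[ l_b(\rho_b) = \frac{\rho_b^2 - 1}{e \rho_b} < \frac{\rho_b}{e}. \]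
   Context: $W_0$ denotes the principal branch of the Lambert W function, i.e. for $z>-1/e$, $W_0(z)$ is the unique solution $w\in(-1,\infty)$ of $we^w=z$. *)

theory Defs
  imports "HOL-Analysis.Analysis"
begin

text \<open>Principal branch of the Lambert W function: for z > -1/e, the unique w > -1 with w e^w = z.\<close>
definition W0 :: "real \<Rightarrow> real" where
  "W0 z = (THE w. w > -1 \<and> w * exp w = z)"

definition lobj :: "real \<Rightarrow> real \<Rightarrow> real" where
  "lobj b \<rho> = ((\<rho>^2 + b*\<rho> + 1) / exp 1) / (\<rho> * W0 ((\<rho>^2 + b*\<rho> + 1) / exp 1))"

definition unique_min_above_sqrt2 :: "(real \<Rightarrow> real) \<Rightarrow> real \<Rightarrow> bool" where
  "unique_min_above_sqrt2 f r \<longleftrightarrow> r > sqrt 2 \<and> (\<forall>s. s > sqrt 2 \<and> s \<noteq> r \<longrightarrow> f r < f s)"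

definition rho0 :: real where
  "rho0 = sqrt (1 + exp (W0 (2 / (exp 1)^2) + 2))"

end

theory Submission
  imports Defs
begin


lemma xexp_strict_mono: "0 < a \<Longrightarrow> a < (b::real) \<Longrightarrow> a * exp a < b * exp b"
  by (intro mult_strict_mono) auto

lemma xexp_pos: "(v::real) * exp v > 0 \<Longrightarrow> v > 0"
  by (metis exp_gt_zero zero_less_mult_pos2)

lemma W0_unique:
  assumes "x > 0" "w > -1" "w * exp w = x"
  shows "W0 x = w"
proof -
  have w0: "w > 0" by (rule xexp_pos) (use assms in simp)
  have uq: "v = w" if v: "v > -1" "v * exp v = x" for v
  proof -
    have v0: "v > 0" by (rule xexp_pos) (use v assms(1) in simp)
    show ?thesis
    proof (rule linorder_cases[of v w])
      assume vw: "v < w" have "v * exp v < w * exp w" by (rule xexp_strict_mono[OF v0 vw])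
      with v(2) assms(3) show ?thesis by linarith
    next
      assume "v = w" then show ?thesis .
    next
      assume wv: "w < v" have "w * exp w < v * exp v" by (rule xexp_strict_mono[OF w0 wv])
      with v(2) assms(3) show ?thesis by linarith
    qed
  qed
  show ?thesis unfolding W0_def
  proof (rule the_equality)
    show "w > -1 \<and> w * exp w = x" using assms by simp
    fix v assume "v > -1 \<and> v * exp v = x" then show "v = w" using uq by blast
  qed
qed

lemma W0_props:
  assumes "x > 0"
  shows "W0 x > 0" "W0 x * exp (W0 x) = x"
proof -
  have "\<exists>w\<ge>0. w \<le> x \<and> w * exp w = x"
  proof (rule IVT)
    show "0 * exp 0 \<le> x" using assms by simp
    show "x \<le> x * exp x" using assms by simp
    show "0 \<le> x" using assms by simp
    show "\<forall>w. 0 \<le> w \<and> w \<le> x \<longrightarrow> isCont (\<lambda>w. w * exp w) w" by (auto intro!: continuous_intros)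
  qed
  then obtain w where w: "w \<ge> 0" "w * exp w = x" by blast
  then have "W0 x = w" using assms by (intro W0_unique) auto
  moreover have "w > 0" using w assms by (cases "w = 0") auto
  ultimately show "W0 x > 0" "W0 x * exp (W0 x) = x" using w by auto
qed

lemma W0_le_iff:
  assumes "x > 0" "W0 x \<le> c"
  shows "x \<le> c * exp c"
proof -
  have "W0 x > 0" "W0 x * exp (W0 x) = x" using W0_props assms by auto
  then show ?thesis using assms
    by (metis order_le_less xexp_strict_mono order_refl)
qed

lemma ln_strict: "0 < r \<Longrightarrow> r \<noteq> 1 \<Longrightarrow> ln r < r - (1::real)"
  by (meson antisym_conv1 ln_eq_minus_one ln_le_minus_one)

definition hh :: "real \<Rightarrow> real" where
  "hh r = ((r^2-1)*ln(r^2-1) - 2*r^2)/r"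

lemma hh_deriv:
  assumes "r > 1" shows "(hh has_real_derivative ((r^2+1)*ln(r^2-1)/r^2)) (at r)"
proof -
  have u: "r^2 - 1 > 0" using assms by (simp add: power_less_one_iff)
  have "(hh has_real_derivative
     (((2*r)*ln(r^2-1) + (r^2-1)*((2*r)/(r^2-1)) - 4*r)*r - ((r^2-1)*ln(r^2-1) - 2*r^2)) / r^2) (at r)"
    unfolding hh_def using assms u
    by (auto intro!: derivative_eq_intros simp: power2_eq_square)
  moreover have "(((2*r)*ln(r^2-1) + (r^2-1)*((2*r)/(r^2-1)) - 4*r)*r - ((r^2-1)*ln(r^2-1) - 2*r^2)) / r^2
      = (r^2+1)*ln(r^2-1)/r^2"
  proof -
    have "(r^2-1)*((2*r)/(r^2-1)) = 2*r" using u by simp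
    then show ?thesis by (simp add: algebra_simps power2_eq_square)
  qed
  ultimately show ?thesis by (simp only:)
qed

lemma sqrt2_gt1: "sqrt 2 > (1::real)" by simp

lemma half_lem: "- (z - x) \<le> (x - a)/2 \<Longrightarrow> a < x \<Longrightarrow> a < (z::real)" by argo

lemma sq_gt: "x > sqrt 2 \<Longrightarrow> x^2 > (2::real)"
proof -
  assume "x > sqrt 2"
  then have "(sqrt 2)^2 < x^2" by (intro power_strict_mono) auto
  then show ?thesis by simp
qed

lemma hh_mono: assumes "sqrt 2 < a" "a < b" shows "hh a < hh b"
proof (rule DERIV_pos_imp_increasing[OF assms(2)])
  fix x assume "a \<le> x" "x \<le> b"
  then have x: "x > sqrt 2" using assms by simp
  then have x2: "x^2 > 2" by (rule sq_gt)
  have "x > 1" using x sqrt2_gt1 by linarith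
  moreover have "(x^2+1)*ln(x^2-1)/x^2 > 0" using x2 by (intro divide_pos_pos mult_pos_pos) auto
  ultimately show "\<exists>y. DERIV hh x :> y \<and> y > 0" using hh_deriv by blast
qed

lemma hh_cont: "x > 1 \<Longrightarrow> isCont hh x"
  using hh_deriv DERIV_isCont by blast

lemma hh_sqrt2: "hh (sqrt 2) = -2 * sqrt 2"
  unfolding hh_def by (simp add: field_simps)

lemma hh_surj: assumes "b > -2" shows "\<exists>r>sqrt 2. hh r = b"
proof -
  define R where "R = sqrt (exp 4 + 1) + \<bar>b\<bar> + 4"
  have s1: "sqrt (exp 4 + 1) \<ge> 1" by simp
  have R1: "R \<ge> 1" "R \<ge> sqrt (exp 4 + 1)" unfolding R_def using s1 by auto
  have "R^2 \<ge> (sqrt (exp 4 + 1))^2" using R1 s1 by (intro power_mono) auto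
  then have Ru: "R^2 - 1 \<ge> exp 4" by simp
  then have L: "ln (R^2 - 1) \<ge> 4" by (metis exp_gt_zero ln_exp ln_le_cancel_iff order_less_le_trans)
  have "(R^2-1)*ln(R^2-1) \<ge> (R^2-1)*4" using L Ru
  proof -
    have "R^2-1 \<ge> 0" using Ru exp_gt_zero[of 4] by linarith
    then show ?thesis using L by (intro mult_left_mono) auto
  qed
  then have hA: "hh R \<ge> ((R^2-1)*4 - 2*R^2)/R" unfolding hh_def using R1
    by (intro divide_right_mono) auto
  have hB: "((R^2-1)*4 - 2*R^2)/R = 2*R - 4/R" using R1 by (simp add: field_simps power2_eq_square)
  have "4/R \<le> 4" using R1 by (simp add: field_simps)
  moreover have "b \<le> R - 4" unfolding R_def using s1 abs_ge_self[of b] by linarith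
  ultimately have hR: "hh R \<ge> b" using hA hB R1 by linarith
  have "sqrt 2 \<le> R" unfolding R_def
  proof -
    have "sqrt 2 \<le> sqrt 4" by (rule real_sqrt_le_mono) simp
    then have "sqrt 2 \<le> 2" by simp 
    then show "sqrt 2 \<le> sqrt (exp 4 + 1) + \<bar>b\<bar> + 4" using s1 by linarith
  qed
  have s2: "sqrt 2 > 1" by simp
  have "\<exists>x\<ge>sqrt 2. x \<le> R \<and> hh x = b"
  proof (rule IVT)
    show "hh (sqrt 2) \<le> b" unfolding hh_sqrt2 using assms s2 by linarith
    show "b \<le> hh R" by (rule hR)
    show "sqrt 2 \<le> R" by fact
    show "\<forall>x. sqrt 2 \<le> x \<and> x \<le> R \<longrightarrow> isCont hh x" by (meson hh_cont less_le_trans s2)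
  qed
  then obtain x where x: "x \<ge> sqrt 2" "hh x = b" by blast
  have "x \<noteq> sqrt 2" using x assms hh_sqrt2 s2 by auto
  then show ?thesis using x by (intro exI[of _ x]) auto
qed

definition gg :: "real \<Rightarrow> real" where "gg y = (THE r. r > sqrt 2 \<and> hh r = y)"

lemma gg_hh: assumes "z > sqrt 2" shows "gg (hh z) = z"
  unfolding gg_def
proof (rule the_equality)
  show "sqrt 2 < z \<and> hh z = hh z" using assms by simp
  fix r assume r: "sqrt 2 < r \<and> hh r = hh z"
  show "r = z"
  proof (rule ccontr)
    assume "r \<noteq> z"
    then consider "r < z" | "z < r" by linarith
    then show False using hh_mono r assms by cases fastforce+
  qed
qed

lemma gg_props: assumes "y > -2" shows "gg y > sqrt 2" "hh (gg y) = y"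
proof -
  obtain r where r: "r > sqrt 2" "hh r = y" using hh_surj assms by blast
  then have "gg y = r" using gg_hh by blast
  then show "gg y > sqrt 2" "hh (gg y) = y" using r by auto
qed

lemma gg_deriv: assumes "y > -2"
  shows "(gg has_real_derivative (gg y)^2/(((gg y)^2+1)*ln((gg y)^2-1))) (at y)"
proof -
  define x where "x = gg y"
  have x: "x > sqrt 2" "hh x = y" using gg_props assms x_def by auto
  have x2: "x^2 > 2" using x sq_gt by blast
  have x1: "x > 1" using x sqrt2_gt1 by linarith
  have D: "(x^2+1)*ln(x^2-1)/x^2 > 0" using x2 by (intro divide_pos_pos mult_pos_pos) auto
  have cont: "isCont gg (hh x)"
  proof (rule isCont_inverse_function[where d = "(x - sqrt 2)/2" and f = hh and g = gg and x = x])
    show "0 < (x - sqrt 2)/2" using x by simp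
  next
    fix z assume "\<bar>z - x\<bar> \<le> (x - sqrt 2)/2"
    then have "- (z - x) \<le> (x - sqrt 2)/2" by (rule abs_le_D2)
    then have z: "z > sqrt 2" using x(1) half_lem by blast
    then show "gg (hh z) = z" by (rule gg_hh)
  next
    fix z assume "\<bar>z - x\<bar> \<le> (x - sqrt 2)/2"
    then have "- (z - x) \<le> (x - sqrt 2)/2" by (rule abs_le_D2)
    then have z: "z > sqrt 2" using x(1) half_lem by blast
    then show "isCont hh z" using sqrt2_gt1 hh_cont by (meson less_trans)
  qed
  have "(gg has_real_derivative inverse ((x^2+1)*ln(x^2-1)/x^2)) (at y)"
  proof (rule DERIV_inverse_function[where a = "-2" and b = "y+1"])
    show "DERIV hh (gg y) :> (x^2+1)*ln(x^2-1)/x^2" using hh_deriv x1 x_def by simp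
    show "(x^2+1)*ln(x^2-1)/x^2 \<noteq> 0" using D by (metis less_irrefl)
    show "-2 < y" "y < y + 1" using assms by auto
    show "\<And>z. -2 < z \<Longrightarrow> z < y + 1 \<Longrightarrow> hh (gg z) = z" using gg_props by auto
    show "isCont gg y" using cont x by simp
  qed
  then show ?thesis unfolding x_def[symmetric] by (simp add: field_simps)
qed

lemma rho0_props: "rho0 > sqrt 2" "hh rho0 = 0"
proof -
  define v where "v = W0 (2 / (exp 1)^2)"
  have v: "v > 0" "v * exp v = 2 / (exp 1)^2" unfolding v_def using W0_props[of "2 / (exp 1)^2"] by auto
  define E where "E = exp (v + 2)"
  have E1: "E > 1" unfolding E_def using v by simp
  have r: "rho0 = sqrt (1 + E)" unfolding rho0_def E_def v_def by simp
  have r2: "rho0^2 = 1 + E" unfolding r using E1 by simp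
  show "rho0 > sqrt 2" unfolding r using E1 by simp
  have e2: "exp (v+2) = exp v * (exp 1)^2"
  proof -
    have "exp (2::real) = (exp 1)^2" by (metis exp_add one_add_one power2_eq_square)
    then show ?thesis by (simp add: exp_add)
  qed
  have "v * E = 2" unfolding E_def e2 using v by (simp add: field_simps)
  then have "(rho0^2-1)*ln(rho0^2-1) - 2*rho0^2 = 0" unfolding r2 E_def by (simp add: algebra_simps)
  then show "hh rho0 = 0" unfolding hh_def by simp
qed

lemma key_ineq:
  assumes "r > 0" "r \<noteq> 1" "(p::real) > 1"
  shows "(p^2-1)*r*ln r - (r-1)*(p^2*r-1) < 0"
proof -
  have "ln r < r - 1" using assms by (meson antisym_conv1 ln_eq_minus_one ln_le_minus_one)
  then have "(p^2-1)*r*ln r < (p^2-1)*r*(r-1)" using assms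
    by (intro mult_strict_left_mono) (auto simp: power_less_one_iff one_less_power)
  moreover have "(p^2-1)*r*(r-1) - (r-1)*(p^2*r-1) = - ((r-1)^2)" by (simp add: algebra_simps power2_eq_square)
  moreover have "- ((r-1)^2) \<le> 0" by simp
  ultimately show ?thesis by linarith
qed


lemma canc: "1 < (p::real) \<Longrightarrow> 1 < u \<Longrightarrow> 0 < L \<Longrightarrow> p * p / (L + L * (p * p)) = p * (p * u) / (L * u + L * (p * (p * u)))"
proof -
  assume a: "1 < (p::real)" "1 < u" "0 < L"
  have e1: "p*(p*u) / (L*u + L*(p*(p*u))) = (u*(p*p)) / (u*(L + L*(p*p)))" by (simp add: algebra_simps)
  have e2: "(u*(p*p)) / (u*(L + L*(p*p))) = (p*p)/(L + L*(p*p))" using a by (intro mult_divide_mult_cancel_left) simp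
  show ?thesis using e1 e2 by simp
qed

lemma poslem: "0 < (r::real) \<Longrightarrow> 0 \<le> b \<Longrightarrow> 0 < r^2 + b*r + 1"
  using mult_nonneg_nonneg[of b r] zero_le_power2[of r] by linarith

lemma minimiser:
  assumes rho: "\<rho> > sqrt 2" "hh \<rho> = b" and b: "b \<ge> 0"
  shows "lobj b \<rho> = (\<rho>^2 - 1) / (exp 1 * \<rho>)"
    "\<And>s. s > sqrt 2 \<Longrightarrow> s \<noteq> \<rho> \<Longrightarrow> lobj b \<rho> < lobj b s"
proof -
  have p2: "\<rho>^2 > 2" using rho sq_gt by blast
  have p1: "\<rho> > 1" using rho sqrt2_gt1 by linarith
  define u where "u = \<rho>^2 - 1"
  define L where "L = ln u"
  have u1: "u > 1" unfolding u_def using p2 by simp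
  have L0: "L > 0" unfolding L_def using u1 by simp
  have beq: "b * \<rho> = u * L - 2 * \<rho>^2" using rho(2) p1 unfolding hh_def u_def L_def
    by (simp add: field_simps)
  have xpos: "(\<rho>^2 + b*\<rho> + 1) / exp 1 > 0" using p1 b poslem by (intro divide_pos_pos) auto
  have eL: "exp (L - 1) = u / exp 1" unfolding L_def using u1 by (simp add: exp_diff)
  have weq0: "(L - 1) * u = \<rho>^2 + b*\<rho> + 1" using beq unfolding u_def by (simp add: algebra_simps)
  have weq: "(L - 1) * exp (L - 1) = (\<rho>^2 + b*\<rho> + 1) / exp 1"
    unfolding eL weq0[symmetric] by simp
  have W: "W0 ((\<rho>^2 + b*\<rho> + 1) / exp 1) = L - 1"
    by (rule W0_unique[OF xpos]) (use L0 weq in auto)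
  have Lne: "L - 1 \<noteq> 0" using weq xpos by auto
  have "lobj b \<rho> = ((\<rho>^2 + b*\<rho> + 1) / exp 1) / (\<rho> * (L - 1))"
    unfolding lobj_def W by (rule refl)
  also have "\<dots> = ((L - 1) * (u / exp 1)) / (\<rho> * (L - 1))" using weq eL by simp
  also have "\<dots> = u / (exp 1 * \<rho>)" using Lne p1 by (simp add: field_simps)
  finally show val: "lobj b \<rho> = (\<rho>^2 - 1) / (exp 1 * \<rho>)" unfolding u_def .
  fix s assume s: "s > sqrt 2" "s \<noteq> \<rho>"
  have s1: "s > 0" using s sqrt2_gt1 by linarith
  define x where "x = (s^2 + b * s + 1) / exp 1"
  define w where "w = W0 x"
  have xs: "x > 0" unfolding x_def using s1 b poslem by (intro divide_pos_pos) auto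
  have w: "w > 0" "w * exp w = x" unfolding w_def using W0_props xs by auto
  have ls: "lobj b s = exp w / s" unfolding lobj_def x_def[symmetric] w_def[symmetric] using w s1
    by (simp add: field_simps)
  define m where "m = u / (exp 1 * \<rho>)"
  define r where "r = s / \<rho>"
  have r: "r > 0" "r \<noteq> 1" unfolding r_def using s1 p1 s by auto
  have sr: "s = \<rho> * r" unfolding r_def using p1 by simp
  have ms: "m * s = u * r / exp 1" unfolding m_def sr using p1 by (simp add: field_simps)
  have lnms: "ln (m * s) = L - 1 + ln r" unfolding ms L_def using u1 r
    by (simp add: ln_div ln_mult)
  have "(\<rho>^2-1)*r*ln r - (r-1)*(\<rho>^2*r-1) < 0" using key_ineq r p1 by blast
  then have D: "(m * s) * ln (m * s) < x"
  proof -
    assume k: "(\<rho>^2-1)*r*ln r - (r-1)*(\<rho>^2*r-1) < 0"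
    have "(m* s)*ln(m* s)*exp 1 = u*r*(L - 1 + ln r)" by (simp only: lnms) (simp add: ms)
    also have "\<dots> = u*r*L - u*r + u*r*ln r" by (simp add: algebra_simps)
    also have "u*r*L = (b*\<rho> + 2*\<rho>^2) * r" using beq by simp
    finally have "(m* s)*ln(m* s)*exp 1 = (b*\<rho> + 2*\<rho>^2) * r - u*r + u*r*ln r" .
    moreover have "x * exp 1 = s^2 + b * s + 1" unfolding x_def by simp
    moreover have "(b*\<rho> + 2*\<rho>^2) * r - u*r + u*r*ln r - (s^2 + b * s + 1)
        = (\<rho>^2-1)*r*ln r - (r-1)*(\<rho>^2*r-1)" unfolding sr u_def by (simp add: algebra_simps power2_eq_square)
    ultimately have "(m* s)*ln(m* s)*exp 1 < x * exp 1" using k by linarith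
    then show ?thesis by simp
  qed
  show "lobj b \<rho> < lobj b s"
  proof (rule ccontr)
    assume "\<not> lobj b \<rho> < lobj b s"
    then have "exp w / s \<le> m" using val ls unfolding m_def u_def by simp
    then have "exp w \<le> m * s" using s1 by (simp add: field_simps)
    then have "w \<le> ln (m * s)" by (metis exp_gt_zero ln_exp ln_le_cancel_iff order_less_le_trans)
    then have "x \<le> ln (m* s) * exp (ln (m* s))" using W0_le_iff xs unfolding w_def by blast
    moreover have "m * s > 0" unfolding ms using u1 r by simp
    ultimately have "x \<le> ln (m* s) * (m* s)" by simp
    with D show False by (simp add: mult.commute)
  qed
qed

lemma at_point:
  assumes b: "b \<ge> 0"
  shows "unique_min_above_sqrt2 (lobj b) (gg b) \<and>
          (gg has_real_derivative
             ((gg b)^2 / (((gg b)^2 + 1) * ln ((gg b)^2 - 1)))) (at b within {0..}) \<and>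
          (gg b)^2 / (((gg b)^2 + 1) * ln ((gg b)^2 - 1))
             = gg b / (2 * gg b + b) * (1 - 2 / ((gg b)^2 + 1)) \<and>
          gg b / (2 * gg b + b) * (1 - 2 / ((gg b)^2 + 1)) > 0 \<and>
          lobj b (gg b) = ((gg b)^2 - 1) / (exp 1 * gg b) \<and>
          ((gg b)^2 - 1) / (exp 1 * gg b) < gg b / exp 1"
proof -
  define p where "p = gg b"
  have bb: "b > -2" using b by simp
  have p: "p > sqrt 2" "hh p = b" using gg_props[OF bb] p_def by auto
  have p2: "p^2 > 2" using p sq_gt by blast
  have p1: "p > 1" using p sqrt2_gt1 by linarith
  define u where "u = p^2 - 1"
  define L where "L = ln u"
  have u1: "u > 1" unfolding u_def using p2 by simp
  have L0: "L > 0" unfolding L_def using u1 by simp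
  have beq: "b * p = u * L - 2 * p^2" using p(2) p1 unfolding hh_def u_def L_def
    by (simp add: field_simps)
  have um: "unique_min_above_sqrt2 (lobj b) p"
    unfolding unique_min_above_sqrt2_def using p minimiser(2)[OF p b] by blast
  have der: "(gg has_real_derivative (p^2 / ((p^2 + 1) * ln (p^2 - 1)))) (at b within {0..})"
    using gg_deriv[OF bb] unfolding p_def by (rule has_field_derivative_at_within)
  have 2: "2 * p + b = u * L / p" using beq p1 by (simp add: field_simps power2_eq_square)
  have eq: "p^2 / ((p^2 + 1) * ln (p^2 - 1)) = p / (2 * p + b) * (1 - 2 / (p^2 + 1))"
  proof -
    have pp0: "p^2 + 1 > 0" using zero_le_power2[of p] by linarith
    then have pp: "p^2 + 1 \<noteq> 0" by simp
    have a: "1 - 2 / (p^2 + 1) = u / (p^2 + 1)" unfolding u_def using pp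
      by (simp add: divide_simps)
    show ?thesis unfolding 2 a unfolding L_def[symmetric] u_def[symmetric] using p1 u1 L0
      apply (simp add: field_simps power2_eq_square)
      by (rule canc) (use p1 u1 L0 in auto)
  qed
  have pos: "p / (2 * p + b) * (1 - 2 / (p^2 + 1)) > 0"
  proof -
    have "2 / (p^2 + 1) < 1" using p2 by simp
    then show ?thesis using p1 b by (intro mult_pos_pos divide_pos_pos) auto
  qed
  have val: "lobj b p = (p^2 - 1) / (exp 1 * p)" by (rule minimiser(1)[OF p b])
  have lt: "(p^2 - 1) / (exp 1 * p) < p / exp 1"
  proof -
    have "(p^2 - 1) / (exp 1 * p) < p^2 / (exp 1 * p)" using p1 by (intro divide_strict_right_mono) auto
    also have "p^2 / (exp 1 * p) = p / exp 1" using p1 by (simp add: power2_eq_square)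
    finally show ?thesis .
  qed
  show ?thesis using um der eq pos val lt unfolding p_def by blast
qed

lemma sigma_unique:
  assumes s0: "\<sigma> 0 = rho0"
    and sd: "\<forall>b\<ge>0. \<sigma> b > sqrt 2 \<and>
             (\<sigma> has_real_derivative
                ((\<sigma> b)^2 / (((\<sigma> b)^2 + 1) * ln ((\<sigma> b)^2 - 1)))) (at b within {0..})"
  shows "\<forall>b\<ge>0. \<sigma> b = gg b"
proof -
  have kd: "((\<lambda>b. hh (\<sigma> b) - b) has_field_derivative 0) (at b within {0..})" if "b \<in> {0..}" for b
  proof -
    define q where "q = \<sigma> b"
    have q: "q > sqrt 2" using sd that q_def by auto
    have q2: "q^2 > 2" using q sq_gt by blast
    have q1: "q > 1" using q sqrt2_gt1 by linarith
    have Lq: "ln (q^2 - 1) > 0" using q2 by simp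
    have d1: "(\<sigma> has_real_derivative (q^2 / ((q^2 + 1) * ln (q^2 - 1)))) (at b within {0..})"
      using sd that q_def by auto
    have d2: "DERIV hh (\<sigma> b) :> (q^2+1)*ln(q^2-1)/q^2" using hh_deriv q1 q_def by simp
    have "((\<lambda>b. hh (\<sigma> b)) has_field_derivative
        ((q^2+1)*ln(q^2-1)/q^2) * (q^2 / ((q^2 + 1) * ln (q^2 - 1)))) (at b within {0..})"
      by (rule DERIV_chain2[OF d2 d1])
    moreover have "((q^2+1)*ln(q^2-1)/q^2) * (q^2 / ((q^2 + 1) * ln (q^2 - 1))) = 1"
    proof -
      have A: "(q^2+1)*ln(q^2-1) \<noteq> 0" using Lq q1 by (intro mult_pos_pos[THEN less_imp_neq, THEN not_sym]) auto
      have B: "q^2 \<noteq> 0" using q1 by simp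
      have "\<And>A B::real. A \<noteq> 0 \<Longrightarrow> B \<noteq> 0 \<Longrightarrow> A / B * (B / A) = 1" by simp
      from this[OF A B] show ?thesis by simp
    qed
    ultimately have "((\<lambda>b. hh (\<sigma> b)) has_field_derivative 1) (at b within {0..})" by simp
    then have "((\<lambda>b. hh (\<sigma> b) - b) has_field_derivative 1 - 1) (at b within {0..})"
      by (intro DERIV_diff) auto
    then show ?thesis by simp
  qed
  obtain c where c: "\<forall>x\<in>{0..}. hh (\<sigma> x) - x = c"
    using has_field_derivative_zero_constant[of "{0::real..}" "\<lambda>b. hh (\<sigma> b) - b"] kd by auto
  have "c = 0" using c[rule_format, of 0] s0 rho0_props by simp
  show ?thesis
  proof (intro allI impI)
    fix b :: real assume b: "b \<ge> 0"
    have "hh (\<sigma> b) = b" using c \<open>c = 0\<close> b by auto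
    then have "gg b = gg (hh (\<sigma> b))" by simp
    also have "\<dots> = \<sigma> b" using sd b gg_hh by auto
    finally show "\<sigma> b = gg b" by simp
  qed
qed

theorem lemmaG2:
  shows "unique_min_above_sqrt2 (lobj 0) rho0 \<and>
    (\<exists>\<rho> :: real \<Rightarrow> real.
       \<rho> 0 = rho0 \<and>
       (\<forall>b\<ge>0.
          unique_min_above_sqrt2 (lobj b) (\<rho> b) \<and>
          (\<rho> has_real_derivative
             ((\<rho> b)^2 / (((\<rho> b)^2 + 1) * ln ((\<rho> b)^2 - 1)))) (at b within {0..}) \<and>
          (\<rho> b)^2 / (((\<rho> b)^2 + 1) * ln ((\<rho> b)^2 - 1))
             = \<rho> b / (2 * \<rho> b + b) * (1 - 2 / ((\<rho> b)^2 + 1)) \<and>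
          \<rho> b / (2 * \<rho> b + b) * (1 - 2 / ((\<rho> b)^2 + 1)) > 0 \<and>
          lobj b (\<rho> b) = ((\<rho> b)^2 - 1) / (exp 1 * \<rho> b) \<and>
          ((\<rho> b)^2 - 1) / (exp 1 * \<rho> b) < \<rho> b / exp 1) \<and>
       (\<forall>\<sigma> :: real \<Rightarrow> real.
          \<sigma> 0 = rho0 \<and>
          (\<forall>b\<ge>0. \<sigma> b > sqrt 2 \<and>
             (\<sigma> has_real_derivative
                ((\<sigma> b)^2 / (((\<sigma> b)^2 + 1) * ln ((\<sigma> b)^2 - 1)))) (at b within {0..}))
          \<longrightarrow> (\<forall>b\<ge>0. \<sigma> b = \<rho> b)))"
proof -
  have g0: "gg 0 = rho0" using gg_hh[OF rho0_props(1)] rho0_props(2) by simp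
  have E: "\<exists>\<rho> :: real \<Rightarrow> real.
       \<rho> 0 = rho0 \<and>
       (\<forall>b\<ge>0.
          unique_min_above_sqrt2 (lobj b) (\<rho> b) \<and>
          (\<rho> has_real_derivative
             ((\<rho> b)^2 / (((\<rho> b)^2 + 1) * ln ((\<rho> b)^2 - 1)))) (at b within {0..}) \<and>
          (\<rho> b)^2 / (((\<rho> b)^2 + 1) * ln ((\<rho> b)^2 - 1))
             = \<rho> b / (2 * \<rho> b + b) * (1 - 2 / ((\<rho> b)^2 + 1)) \<and>
          \<rho> b / (2 * \<rho> b + b) * (1 - 2 / ((\<rho> b)^2 + 1)) > 0 \<and>
          lobj b (\<rho> b) = ((\<rho> b)^2 - 1) / (exp 1 * \<rho> b) \<and>
          ((\<rho> b)^2 - 1) / (exp 1 * \<rho> b) < \<rho> b / exp 1) \<and>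
       (\<forall>\<sigma> :: real \<Rightarrow> real.
          \<sigma> 0 = rho0 \<and>
          (\<forall>b\<ge>0. \<sigma> b > sqrt 2 \<and>
             (\<sigma> has_real_derivative
                ((\<sigma> b)^2 / (((\<sigma> b)^2 + 1) * ln ((\<sigma> b)^2 - 1)))) (at b within {0..}))
          \<longrightarrow> (\<forall>b\<ge>0. \<sigma> b = \<rho> b))"
    apply (rule exI[of _ gg])
    using g0 at_point sigma_unique by blast
  have "unique_min_above_sqrt2 (lobj 0) rho0" using at_point[of 0] g0 by simp
  then show ?thesis using E by blast
qed

end
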